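(* Let $\mathbf{f} = (f_1, \ldots, f_m) : \mathcal{X} \to \mathcal{Y} \subset \mathbb{R}^m$ with $\mathcal{X} \subset \mathbb{R}^n$ be a multi-objective minimization problem whose ideal point $\mathbf{y}^* = (\min_{\mathbf{y} \in \mathcal{Y}^*} y_1, \ldots, \min_{\mathbf{y} \in \mathcal{Y}^*} y_m)$ is the zero vector, where $\mathcal{Y}^*$ is the Pareto front. Let $\mathbf{w} \in \mathbb{R}^m$ have positive entries and let $g_{\mathbf{w}}(\mathbf{x}) = \max_{1 \le j \le m} w_j |f_j(\mathbf{x}) - y^*_j|$ be the weighted Tchebycheff function with reference point the ideal point. Let $\mathbf{x}^1, \ldots, \mathbf{x}^{v(t)} \in \mathcal{X}$ be finitely many sampled points (with $v(t) \ge 1$), let $\mathbf{x}(t) \in \arg\min_{1 \le i \le v(t)} g_{\mathbf{w}}(\mathbf{x}^i)$, and let $$\mathcal{Y}^t_* = \{\mathbf{f}(\mathbf{x}^i) : 1 \le i \le v(t),\ \mathbf{f}(\mathbf{x}^k) \nprec \mathbf{f}(\mathbf{x}^i) \text{ for all } k \ne i\}.$$ Then $I^1_{\epsilon+}(\mathcal{Y}^t_* ) \le \max_j \frac{1}{w_j}\, g_{\mathbf{w}}(\mathbf{x}(t))$.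
   Context: Pareto dominance: $\mathbf{y}^1 \prec \mathbf{y}^2$ iff $y^1_j \le y^2_j$ for all $j$ and $y^1_k < y^2_k$ for some $k$. A vector $\hat{\mathbf{y}} \in \mathcal{Y}$ is Pareto optimal iff no $\mathbf{y} \in \mathcal{Y}$ satisfies $\mathbf{y} \prec \hat{\mathbf{y}}$; the set of Pareto optimal vectors is the Pareto front $\mathcal{Y}^*$. For sets $A, B \subseteq \mathbb{R}^m$, the additive $\epsilon$-indicator is $I_{\epsilon+}(A,B) = \inf\{\epsilon \in \mathbb{R} : \forall \mathbf{y}^2 \in B\ \exists \mathbf{y}^1 \in A \text{ with } y^1_j \le \epsilon + y^2_j \text{ for all } j\}$, and the unary version is $I^1_{\epsilon+}(A) = I_{\epsilon+}(A, \mathcal{Y}^* )$. *)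

theory Defs
  imports "HOL-Analysis.Analysis" "HOL-Library.Extended_Real"
begin

text \<open>Objective vectors in R^m are modelled as real^'m (m = CARD('m)).\<close>

definition pdom :: "real ^ 'm \<Rightarrow> real ^ 'm \<Rightarrow> bool" (infix "\<prec>\<^sub>P" 50) where
  "y1 \<prec>\<^sub>P y2 \<longleftrightarrow> (\<forall>j. y1 $ j \<le> y2 $ j) \<and> (\<exists>k. y1 $ k < y2 $ k)"

definition pareto_front :: "(real ^ 'm) set \<Rightarrow> (real ^ 'm) set" where
  "pareto_front Y = {yh \<in> Y. \<not> (\<exists>y\<in>Y. y \<prec>\<^sub>P yh)}"

definition is_ideal_point :: "(real ^ 'm) set \<Rightarrow> real ^ 'm \<Rightarrow> bool" where
  "is_ideal_point Ys yst \<longleftrightarrow>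
     (\<forall>j. yst $ j \<in> (\<lambda>y. y $ j) ` Ys \<and> (\<forall>y\<in>Ys. yst $ j \<le> y $ j))"

definition eps_ind :: "(real ^ 'm) set \<Rightarrow> (real ^ 'm) set \<Rightarrow> ereal" where
  "eps_ind A B = Inf {ereal e | e. \<forall>y2\<in>B. \<exists>y1\<in>A. \<forall>j. y1 $ j \<le> e + y2 $ j}"

definition eps_ind1 :: "('a \<Rightarrow> real ^ 'm) \<Rightarrow> 'a set \<Rightarrow> (real ^ 'm) set \<Rightarrow> ereal" where
  "eps_ind1 f X A = eps_ind A (pareto_front (f ` X))"

definition tcheby :: "real ^ 'm \<Rightarrow> real ^ 'm \<Rightarrow> ('a \<Rightarrow> real ^ 'm) \<Rightarrow> 'a \<Rightarrow> real" where
  "tcheby w yst f x = (MAX j. w $ j * \<bar>f x $ j - yst $ j\<bar>)"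

end

theory Submission
  imports Defs
begin

theorem theorem3:
  fixes f :: "real ^ 'n \<Rightarrow> real ^ 'm"
    and X :: "(real ^ 'n) set"
    and w :: "real ^ 'm"
    and xs :: "nat \<Rightarrow> real ^ 'n"
    and v :: nat and it :: nat
  assumes ideal: "is_ideal_point (pareto_front (f ` X)) 0"
    and wpos: "\<forall>j. w $ j > 0"
    and v1: "v \<ge> 1"
    and samples: "\<forall>i\<in>{1..v}. xs i \<in> X"
    and it_mem: "it \<in> {1..v}"
    and it_min: "\<forall>i\<in>{1..v}. tcheby w 0 f (xs it) \<le> tcheby w 0 f (xs i)"
  shows "eps_ind1 f X
           {f (xs i) | i. i \<in> {1..v} \<and> (\<forall>k\<in>{1..v}. k \<noteq> i \<longrightarrow> \<not> (f (xs k) \<prec>\<^sub>P f (xs i)))}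
         \<le> ereal (MAX j. (1 / w $ j) * tcheby w 0 f (xs it))"
proof -
  define g where "g = tcheby w 0 f (xs it)"
  define e where "e = (MAX j. (1 / w $ j) * g)"
  define A where "A = {f (xs i) | i. i \<in> {1..v} \<and> (\<forall>k\<in>{1..v}. k \<noteq> i \<longrightarrow> \<not> (f (xs k) \<prec>\<^sub>P f (xs i)))}"
  define S where "S = {i \<in> {1..v}. \<forall>j. f (xs i) $ j \<le> f (xs it) $ j}"
  define h where "h = (\<lambda>i. \<Sum>j\<in>UNIV. f (xs i) $ j)"
  have finS: "finite S" unfolding S_def by auto
  have itS: "it \<in> S" unfolding S_def using it_mem by auto
  hence neS: "S \<noteq> {}" by auto
  have "Min (h ` S) \<in> h ` S" using finS neS by (intro Min_in) auto
  then obtain i where iS: "i \<in> S" and hi: "h i = Min (h ` S)" by auto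
  have hmin: "\<forall>k\<in>S. h i \<le> h k" using hi finS by auto
  have iA: "f (xs i) \<in> A"
  proof -
    have "\<not> (f (xs k) \<prec>\<^sub>P f (xs i))" if k: "k \<in> {1..v}" for k
    proof
      assume d: "f (xs k) \<prec>\<^sub>P f (xs i)"
      hence le: "\<forall>j. f (xs k) $ j \<le> f (xs i) $ j" and ex: "\<exists>j. f (xs k) $ j < f (xs i) $ j"
        unfolding pdom_def by auto
      have "k \<in> S" using le iS k unfolding S_def by (auto intro: order_trans)
      moreover have "h k < h i" unfolding h_def
        using le ex by (intro sum_strict_mono_ex1) auto
      ultimately show False using hmin by fastforce
    qed
    thus ?thesis unfolding A_def using iS unfolding S_def by blast
  qed
  have fit: "f (xs it) $ j \<le> e" for j
  proof -
    have "w $ j * \<bar>f (xs it) $ j - 0 $ j\<bar> \<le> g"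
      unfolding g_def tcheby_def by (rule Max_ge) auto
    hence "\<bar>f (xs it) $ j\<bar> \<le> (1 / w $ j) * g" using wpos
      by (simp add: field_simps mult.commute)
    moreover have "(1 / w $ j) * g \<le> e" unfolding e_def by (rule Max_ge) auto
    ultimately show ?thesis by linarith
  qed
  have "ereal e \<in> {ereal e | e. \<forall>y2\<in>pareto_front (f ` X). \<exists>y1\<in>A. \<forall>j. y1 $ j \<le> e + y2 $ j}"
  proof -
    have "\<forall>y2\<in>pareto_front (f ` X). \<exists>y1\<in>A. \<forall>j. y1 $ j \<le> e + y2 $ j"
    proof
      fix y2 assume y2: "y2 \<in> pareto_front (f ` X)"
      have "\<forall>j. 0 \<le> y2 $ j" using ideal y2 unfolding is_ideal_point_def by auto
      moreover have "\<forall>j. f (xs i) $ j \<le> f (xs it) $ j" using iS unfolding S_def by auto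
      ultimately have "\<forall>j. f (xs i) $ j \<le> e + y2 $ j" using fit
        by (meson add_increasing2 order_trans)
      thus "\<exists>y1\<in>A. \<forall>j. y1 $ j \<le> e + y2 $ j" using iA by blast
    qed
    thus ?thesis by blast
  qed
  hence "eps_ind A (pareto_front (f ` X)) \<le> ereal e"
    unfolding eps_ind_def by (rule Inf_lower)
  thus ?thesis unfolding eps_ind1_def A_def e_def g_def by simp
qed

end
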